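(* Let $\{x^k\}$ be generated by the ABP algorithm described in the context and assume (A1)–(A6), (A7'), (A8): (A1) $\mathcal F$ is continuously differentiable; (A2) $C$, $Q$ nonempty closed convex, $z_i^*>-\infty$ for each $i$; (A3) each $f_i$ convex; (A4) $\Omega\ne\emptyset$; (A5) $\lambda_k>0$, $\sum\lambda_k=\infty$, $\sum\lambda_k^2<\infty$; (A6) $0<\underline\alpha\le\alpha_k\le\bar\alpha$, $0<\underline\beta\le\beta_k\le\bar\beta$, $0<\underline\gamma\le\gamma_k\le\bar\gamma$ for all $k$; (A7') $\sigma:=\varphi^*-\varphi_{\mathrm{lb}}\le\varepsilon_0$ for a known constant $\varepsilon_0\ge0$; (A8) $\sup_k\|x^k\|\le B<\infty$. Let $\bar M<\infty$ be a uniform bound with $\|d^k\|\le\bar M$ for all $k$ (which exists under these assumptions), $\bar\eta:=\max(\mu,\bar M)$ and $C_*:=\bar\alpha\bar\eta/\mu$. Then there exist a subsequence $\{k_j\}$ and a constant $\ell_*\in[0,C_*\varepsilon_0]$ such that $\Phi_{k_j}\to\ell_*$ and $$H_{k_j}\le\frac{\Phi_{k_j}}{\underline\beta}\xrightarrow{j\to\infty}\frac{\ell_*}{\underline\beta}\le\frac{C_*\varepsilon_0}{\underline\beta},\quad G_{k_j}\le\frac{\Phi_{k_j}}{\underline\gamma}\xrightarrow{j\to\infty}\frac{\ell_*}{\underline\gamma}\le\frac{C_*\varepsilon_0}{\underline\gamma},\quad \Delta^+_{k_j}\le\frac{\Phi_{k_j}}{\underline\alpha}\xrightarrow{j\to\infty}\frac{\ell_*}{\underline\alpha}\le\frac{C_*\varepsilon_0}{\underline\alpha}.$$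 In particular, when $\varepsilon_0=0$, $\ell_*=0$ and $H_{k_j}\to0$, $G_{k_j}\to0$, $\Delta^+_{k_j}\to0$.
   Context: Let $n,m\ge1$, $\mathcal F=(f_1,\dots,f_m)\colon\mathbb R^n\to\mathbb R^m$, $C\subset\mathbb R^n$, $Q\subset\mathbb R^m$, $Q^+:=Q-\mathbb R^m_+=\{y-u:y\in Q,u\in\mathbb R^m_+\}$; $P_S$ is Euclidean projection onto a nonempty closed convex set $S$. Let $z_i^*:=\inf_{x\in C}f_i(x)$, fix $r$ with $r_i>0$, $\sum r_i=1$. Define $\varphi(x):=\max_ir_i(f_i(x)-z_i^* )$, $H(x):=\tfrac12\mathrm{dist}^2(x,C)$, $G(x):=\tfrac12\mathrm{dist}^2(\mathcal F(x),Q^+)$, $\mathcal S:=\{x:H(x)=0,G(x)=0\}$, $\varphi^*:=\inf_{\mathcal S}\varphi$, $\Omega:=\{x\in\mathcal S:\varphi(x)=\varphi^*\}$, $\varphi_{\mathrm{lb}}:=\inf_C\varphi$. ABP algorithm: given $x^0$, $\mu>0$, positive sequences $\{\alpha_k\},\{\beta_k\},\{\gamma_k\},\{\lambda_k\}$: $p^k:=P_{Q^+}(\mathcal F(x^k))$, $\rho^k:=\mathcal F(x^k)-p^k$, $z^k:=x^k-P_C(x^k)$, $v^k:=J_{\mathcal F}(x^k)^T\rho^k$, $w^k:=r_{i^*}\nabla f_{i^*}(x^k)$ with arbitrary $i^*\in\arg\max_ir_i(f_i(x^k)-z_i^* )$, $\Delta_k:=\varphi(x^k)-\varphi_{\mathrm{lb}}$,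 $d^k:=\alpha_k\mathbf 1_{\{\Delta_k\ge0\}}w^k+\beta_kz^k+\gamma_kv^k$, $\eta_k:=\max(\mu,\|d^k\|)$, $x^{k+1}:=x^k-(\lambda_k/\eta_k)d^k$. Notation: $H_k:=H(x^k)$, $G_k:=G(x^k)$, $\Delta_k^+:=\max(\Delta_k,0)$, $\Phi_k:=\alpha_k\Delta_k^++\beta_kH_k+\gamma_kG_k$. *)

theory Defs
  imports "HOL-Analysis.Analysis"
begin

definition Qplus :: "(real^'m) set \<Rightarrow> (real^'m) set" where
  "Qplus Q = {y - u | y u. y \<in> Q \<and> (\<forall>i. 0 \<le> u $ i)}"

definition zstar :: "(real^'n \<Rightarrow> real^'m) \<Rightarrow> (real^'n) set \<Rightarrow> 'm \<Rightarrow> real" where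
  "zstar F C i = Inf ((\<lambda>x. F x $ i) ` C)"

definition phi :: "(real^'n \<Rightarrow> real^'m) \<Rightarrow> (real^'n) set \<Rightarrow> ('m::finite \<Rightarrow> real) \<Rightarrow> real^'n \<Rightarrow> real" where
  "phi F C r x = Max (range (\<lambda>i. r i * (F x $ i - zstar F C i)))"

definition Hfun :: "(real^'n) set \<Rightarrow> real^'n \<Rightarrow> real" where
  "Hfun C x = (infdist x C)^2 / 2"

definition Gfun :: "(real^'n \<Rightarrow> real^'m) \<Rightarrow> (real^'m) set \<Rightarrow> real^'n \<Rightarrow> real" where
  "Gfun F Q x = (infdist (F x) (Qplus Q))^2 / 2"

definition feas :: "(real^'n \<Rightarrow> real^'m) \<Rightarrow> (real^'n) set \<Rightarrow> (real^'m) set \<Rightarrow> (real^'n) set" where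
  "feas F C Q = {x. Hfun C x = 0 \<and> Gfun F Q x = 0}"

definition phistar :: "(real^'n \<Rightarrow> real^'m) \<Rightarrow> (real^'n) set \<Rightarrow> (real^'m) set \<Rightarrow> ('m::finite \<Rightarrow> real) \<Rightarrow> real" where
  "phistar F C Q r = Inf (phi F C r ` feas F C Q)"

definition Omega :: "(real^'n \<Rightarrow> real^'m) \<Rightarrow> (real^'n) set \<Rightarrow> (real^'m) set \<Rightarrow> ('m::finite \<Rightarrow> real) \<Rightarrow> (real^'n) set" where
  "Omega F C Q r = {x \<in> feas F C Q. phi F C r x = phistar F C Q r}"

definition philb :: "(real^'n \<Rightarrow> real^'m) \<Rightarrow> (real^'n) set \<Rightarrow> ('m::finite \<Rightarrow> real) \<Rightarrow> real" where
  "philb F C r = Inf (phi F C r ` C)"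

end

theory Submission
  imports Defs
begin


lemma tangent_ineq:
  fixes f :: "'a::real_normed_vector \<Rightarrow> real"
  assumes cv: "convex_on UNIV f" and dv: "(f has_derivative D) (at x)"
  shows "f x - f y \<le> D (x - y)"
proof -
  define h where "h = y - x"
  let ?g = "\<lambda>t::real. f (x + t *\<^sub>R h)"
  have cg: "convex_on UNIV ?g"
  proof (rule convex_onI)
    fix t a b :: real assume t: "0 < t" "t < 1"
    have "x + ((1 - t) *\<^sub>R a + t *\<^sub>R b) *\<^sub>R h = (1 - t) *\<^sub>R (x + a *\<^sub>R h) + t *\<^sub>R (x + b *\<^sub>R h)"
      by (simp add: algebra_simps)
    then show "?g ((1 - t) *\<^sub>R a + t *\<^sub>R b) \<le> (1 - t) * ?g a + t * ?g b"
      using convex_onD[OF cv, of t "x + a *\<^sub>R h" "x + b *\<^sub>R h"] t by simp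
  qed simp
  have lin: "linear D" using dv by (rule has_derivative_linear)
  have d1: "((\<lambda>t::real. x + t *\<^sub>R h) has_derivative (\<lambda>t. t *\<^sub>R h)) (at 0)"
    by (auto intro!: derivative_eq_intros)
  have dv0: "(f has_derivative D) (at ((\<lambda>t::real. x + t *\<^sub>R h) 0))" using dv by simp
  have "(?g has_derivative (\<lambda>t. D (t *\<^sub>R h))) (at 0)"
    using diff_chain_at[OF d1 dv0] by (simp add: o_def)
  moreover have "(\<lambda>t. D (t *\<^sub>R h)) = (\<lambda>t. D h * t)"
    using lin by (auto simp: linear_scale)
  ultimately have "(?g has_real_derivative D h) (at 0)"
    by (simp add: has_field_derivative_def)
  hence "(?g has_real_derivative D h) (at 0 within UNIV)" by simp
  from convex_on_imp_above_tangent[OF cg _ _ _ this, of 1]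
  have "?g 1 - ?g 0 \<ge> D h * (1 - 0)" by simp
  hence "f y - f x \<ge> D h" by (simp add: h_def)
  moreover have "D (x - y) = - D h" using lin unfolding h_def
    by (metis linear_diff minus_diff_eq)
  ultimately show ?thesis by simp
qed

lemma infdist_closest:
  fixes S :: "'a::{real_inner,heine_borel} set"
  assumes "S \<noteq> {}"
  shows "infdist a S = dist a (closest_point (closure S) a)"
proof (rule antisym)
  have ne: "closure S \<noteq> {}" using assms by simp
  let ?p = "closest_point (closure S) a"
  have p: "?p \<in> closure S" using closest_point_in_set[OF closed_closure ne] .
  have "infdist ?p S = 0" using p in_closure_iff_infdist_zero[OF assms] by simp
  then show "infdist a S \<le> dist a ?p" using infdist_triangle[of a S ?p] by simp
  show "dist a ?p \<le> infdist a S"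
    unfolding infdist_notempty[OF assms]
    by (rule cINF_greatest[OF assms]) (meson closest_point_le closed_closure closure_subset subsetD)
qed

lemma Qplus_convex: fixes Q :: "(real^'m) set" shows "convex Q \<Longrightarrow> convex (Qplus Q)"
  unfolding convex_def Qplus_def
proof (clarify)
  fix y1 u1 y2 u2 :: "real^'m" and s t :: real
  assume cq: "\<forall>x\<in>Q. \<forall>y\<in>Q. \<forall>u\<ge>0. \<forall>v\<ge>0. u + v = 1 \<longrightarrow> u *\<^sub>R x + v *\<^sub>R y \<in> Q"
    and h: "y1 \<in> Q" "\<forall>i. 0 \<le> u1 $ i" "y2 \<in> Q" "\<forall>i. 0 \<le> u2 $ i" "0 \<le> s" "0 \<le> t" "s + t = 1"
  show "\<exists>y u. s *\<^sub>R (y1 - u1) + t *\<^sub>R (y2 - u2) = y - u \<and> y \<in> Q \<and> (\<forall>i. 0 \<le> u $ i)"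
    apply (rule exI[of _ "s *\<^sub>R y1 + t *\<^sub>R y2"], rule exI[of _ "s *\<^sub>R u1 + t *\<^sub>R u2"])
    using h cq by (auto simp: algebra_simps)
qed

lemma Qplus_down: "y \<in> Qplus Q \<Longrightarrow> \<forall>i. 0 \<le> a $ i \<Longrightarrow> y - a \<in> Qplus Q"
  unfolding Qplus_def
  by clarify (rule_tac x=ya in exI, rule_tac x="u + a" in exI, auto simp: algebra_simps)

lemma Qplus_closure_down:
  assumes "y \<in> closure (Qplus Q)" "\<forall>i. 0 \<le> a $ i"
  shows "y - a \<in> closure (Qplus Q)"
proof -
  have "(\<lambda>z. z - a) ` closure (Qplus Q) \<subseteq> closure (Qplus Q)"
    apply (rule image_closure_subset)
    using Qplus_down[OF _ assms(2)] closure_subset by (auto intro!: continuous_intros)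
  then show ?thesis using assms(1) by auto
qed


theorem proposition7:
  fixes F :: "real^'n \<Rightarrow> real^'m"
    and J :: "real^'n \<Rightarrow> real^'n^'m"
    and C :: "(real^'n) set" and Q :: "(real^'m) set"
    and r :: "'m \<Rightarrow> real"
    and x :: "nat \<Rightarrow> real^'n" and istar :: "nat \<Rightarrow> 'm"
    and d :: "nat \<Rightarrow> real^'n"
    and \<alpha> \<beta> \<gamma> lam :: "nat \<Rightarrow> real"
    and \<mu> \<alpha>lo \<alpha>hi \<beta>lo \<beta>hi \<gamma>lo \<gamma>hi \<epsilon>0 B Mbar :: real
    and Delta Phi :: "nat \<Rightarrow> real"
  assumes r_pos: "\<forall>i. r i > 0" and r_sum: "(\<Sum>i\<in>UNIV. r i) = 1"
    and mu_pos: "\<mu> > 0"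
    \<comment> \<open>(A1) F continuously differentiable, with Jacobian J\<close>
    and A1_deriv: "\<forall>y. (F has_derivative (\<lambda>h. J y *v h)) (at y)"
    and A1_cont: "continuous_on UNIV J"
    \<comment> \<open>(A2)\<close>
    and A2_C: "C \<noteq> {}" "closed C" "convex C"
    and A2_Q: "Q \<noteq> {}" "closed Q" "convex Q"
    and A2_z: "\<forall>i. bdd_below ((\<lambda>y. F y $ i) ` C)"
    \<comment> \<open>(A3)\<close>
    and A3: "\<forall>i. convex_on UNIV (\<lambda>y. F y $ i)"
    \<comment> \<open>(A4)\<close>
    and A4: "Omega F C Q r \<noteq> {}"
    \<comment> \<open>(A5)\<close>
    and A5: "\<forall>k. lam k > 0" "\<not> summable lam" "summable (\<lambda>k. (lam k)^2)"
    \<comment> \<open>(A6)\<close>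
    and A6: "0 < \<alpha>lo" "\<forall>k. \<alpha>lo \<le> \<alpha> k \<and> \<alpha> k \<le> \<alpha>hi"
            "0 < \<beta>lo" "\<forall>k. \<beta>lo \<le> \<beta> k \<and> \<beta> k \<le> \<beta>hi"
            "0 < \<gamma>lo" "\<forall>k. \<gamma>lo \<le> \<gamma> k \<and> \<gamma> k \<le> \<gamma>hi"
    \<comment> \<open>(A7')\<close>
    and A7: "0 \<le> \<epsilon>0" "phistar F C Q r - philb F C r \<le> \<epsilon>0"
    \<comment> \<open>(A8)\<close>
    and A8: "\<forall>k. norm (x k) \<le> B"
    \<comment> \<open>ABP algorithm\<close>
    and istar: "\<forall>k j. r j * (F (x k) $ j - zstar F C j)
                       \<le> r (istar k) * (F (x k) $ istar k - zstar F C (istar k))"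
    and Delta_def: "\<forall>k. Delta k = phi F C r (x k) - philb F C r"
    and d_def: "\<forall>k. d k =
        (if Delta k \<ge> 0 then \<alpha> k else 0) *\<^sub>R (r (istar k) *\<^sub>R (J (x k) $ istar k))
      + \<beta> k *\<^sub>R (x k - closest_point C (x k))
      + \<gamma> k *\<^sub>R (transpose (J (x k)) *v
                    (F (x k) - closest_point (closure (Qplus Q)) (F (x k))))"
    and step: "\<forall>k. x (Suc k) = x k - (lam k / max \<mu> (norm (d k))) *\<^sub>R d k"
    and Phi_def: "\<forall>k. Phi k = \<alpha> k * max (Delta k) 0 + \<beta> k * Hfun C (x k)
                              + \<gamma> k * Gfun F Q (x k)"
    \<comment> \<open>uniform bound on the directions\<close>
    and Mbar: "\<forall>k. norm (d k) \<le> Mbar"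
  shows "\<exists>kj :: nat \<Rightarrow> nat. \<exists>ell.
           strict_mono kj \<and>
           0 \<le> ell \<and> ell \<le> (\<alpha>hi * max \<mu> Mbar / \<mu>) * \<epsilon>0 \<and>
           (\<lambda>j. Phi (kj j)) \<longlonglongrightarrow> ell \<and>
           (\<forall>j. Hfun C (x (kj j)) \<le> Phi (kj j) / \<beta>lo) \<and>
           (\<lambda>j. Phi (kj j) / \<beta>lo) \<longlonglongrightarrow> ell / \<beta>lo \<and>
           ell / \<beta>lo \<le> (\<alpha>hi * max \<mu> Mbar / \<mu>) * \<epsilon>0 / \<beta>lo \<and>
           (\<forall>j. Gfun F Q (x (kj j)) \<le> Phi (kj j) / \<gamma>lo) \<and>
           (\<lambda>j. Phi (kj j) / \<gamma>lo) \<longlonglongrightarrow> ell / \<gamma>lo \<and>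
           ell / \<gamma>lo \<le> (\<alpha>hi * max \<mu> Mbar / \<mu>) * \<epsilon>0 / \<gamma>lo \<and>
           (\<forall>j. max (Delta (kj j)) 0 \<le> Phi (kj j) / \<alpha>lo) \<and>
           (\<lambda>j. Phi (kj j) / \<alpha>lo) \<longlonglongrightarrow> ell / \<alpha>lo \<and>
           ell / \<alpha>lo \<le> (\<alpha>hi * max \<mu> Mbar / \<mu>) * \<epsilon>0 / \<alpha>lo \<and>
           (\<epsilon>0 = 0 \<longrightarrow> ell = 0 \<and>
              (\<lambda>j. Hfun C (x (kj j))) \<longlonglongrightarrow> 0 \<and>
              (\<lambda>j. Gfun F Q (x (kj j))) \<longlonglongrightarrow> 0 \<and>
              (\<lambda>j. max (Delta (kj j)) 0) \<longlonglongrightarrow> 0)"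
  proof -
  let ?K = "closure (Qplus Q)"
  obtain xs where xs: "xs \<in> Omega F C Q r" using A4 by blast
  have QPne: "Qplus Q \<noteq> {}"
  proof -
    obtain q where "q \<in> Q" using A2_Q(1) by blast
    then have "q - 0 \<in> Qplus Q" unfolding Qplus_def by fastforce
    then show ?thesis by blast
  qed
  have Kne: "?K \<noteq> {}" using QPne by simp
  have Kcv: "convex ?K" using Qplus_convex[OF A2_Q(3)] convex_closure by blast
  have xsC: "xs \<in> C"
  proof -
    have "Hfun C xs = 0" using xs unfolding Omega_def feas_def by auto
    then have "infdist xs C = 0" unfolding Hfun_def by simp
    then show ?thesis using in_closed_iff_infdist_zero[OF A2_C(2) A2_C(1)] by simp
  qed
  have xsQ: "F xs \<in> ?K"
  proof -
    have "Gfun F Q xs = 0" using xs unfolding Omega_def feas_def by auto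
    then have "infdist (F xs) (Qplus Q) = 0" unfolding Gfun_def by simp
    then show ?thesis using in_closure_iff_infdist_zero[OF QPne] by simp
  qed
  have phixs: "phi F C r xs = phistar F C Q r" using xs unfolding Omega_def by auto
  define c where "c = \<alpha>hi * \<epsilon>0"
  define etab where "etab = max \<mu> Mbar"
  have a0: "0 \<le> \<alpha> k" for k using A6(1) A6(2)[rule_format, of k] by linarith
  have b0: "0 \<le> \<beta> k" for k using A6(3) A6(4)[rule_format, of k] by linarith
  have g0: "0 \<le> \<gamma> k" for k using A6(5) A6(6)[rule_format, of k] by linarith
  have Hnn: "\<And>y. 0 \<le> Hfun C y" unfolding Hfun_def by simp
  have Gnn: "\<And>y. 0 \<le> Gfun F Q y" unfolding Gfun_def by simp
  have tang: "\<And>y j. F y $ j - F xs $ j \<le> (J y *v (y - xs)) $ j"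
  proof -
    fix y j
    have "((\<lambda>z. F z $ j) has_derivative (\<lambda>h. (J y *v h) $ j)) (at y)"
      using bounded_linear.has_derivative[OF bounded_linear_vec_nth[of j] A1_deriv[rule_format, of y]] .
    from tangent_ineq[OF A3[rule_format, of j] this, of xs] show "F y $ j - F xs $ j \<le> (J y *v (y - xs)) $ j" .
  qed
  have key: "Phi k - c \<le> inner (d k) (x k - xs)" for k
  proof -
    define e where "e = x k - xs"
    define P where "P = closest_point C (x k)"
    define p where "p = closest_point ?K (F (x k))"
    define \<rho> where "\<rho> = F (x k) - p"
    define i where "i = istar k"
    have Ha: "2 * Hfun C (x k) \<le> inner (x k - P) e"
    proof -
      have "Hfun C (x k) = (dist (x k) P)^2 / 2"
        unfolding Hfun_def P_def using infdist_closest[OF A2_C(1), of "x k"] closure_closed[OF A2_C(2)] by simp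
      also have "\<dots> = inner (x k - P) (x k - P) / 2" by (simp add: dist_norm power2_norm_eq_inner)
      finally have h1: "2 * Hfun C (x k) = inner (x k - P) (x k - P)" by simp
      have "inner (x k - P) (xs - P) \<le> 0" unfolding P_def using closest_point_dot[OF A2_C(3) A2_C(2) xsC] .
      moreover have "inner (x k - P) e = inner (x k - P) (x k - P) - inner (x k - P) (xs - P)"
        unfolding e_def by (simp add: inner_diff_right)
      ultimately show ?thesis using h1 by simp
    qed
    have pK: "p \<in> ?K" unfolding p_def using closest_point_in_set[OF closed_closure Kne] .
    have rho_nn: "0 \<le> \<rho> $ j" for j
    proof -
      have "p - axis j 1 \<in> ?K" using Qplus_closure_down[OF pK, of "axis j 1"] by (simp add: axis_def)
      from closest_point_dot[OF Kcv closed_closure this, of "F (x k)"]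
      have "inner \<rho> (- axis j 1) \<le> 0" unfolding \<rho>_def p_def by simp
      then show ?thesis by (simp add: inner_axis)
    qed
    have Hb: "2 * Gfun F Q (x k) \<le> inner (transpose (J (x k)) *v \<rho>) e"
    proof -
      have "Gfun F Q (x k) = (dist (F (x k)) p)^2 / 2"
        unfolding Gfun_def p_def using infdist_closest[OF QPne, of "F (x k)"] by simp
      also have "\<dots> = inner \<rho> \<rho> / 2" by (simp add: \<rho>_def dist_norm power2_norm_eq_inner)
      finally have g1: "2 * Gfun F Q (x k) = inner \<rho> \<rho>" by simp
      have "inner (F (x k) - p) (F xs - p) \<le> 0" unfolding p_def using closest_point_dot[OF Kcv closed_closure xsQ] .
      then have g2: "inner \<rho> \<rho> \<le> inner \<rho> (F (x k) - F xs)"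
        unfolding \<rho>_def by (simp add: inner_diff_right)
      have "inner \<rho> (F (x k) - F xs) = (\<Sum>j\<in>UNIV. \<rho> $ j * (F (x k) $ j - F xs $ j))"
        by (simp add: inner_vec_def)
      also have "\<dots> \<le> (\<Sum>j\<in>UNIV. \<rho> $ j * (J (x k) *v e) $ j)"
        by (rule sum_mono, rule mult_left_mono) (use tang rho_nn e_def in auto)
      also have "\<dots> = inner \<rho> (J (x k) *v e)" by (simp add: inner_vec_def)
      also have "\<dots> = inner (transpose (J (x k)) *v \<rho>) e" by (simp add: dot_lmul_matrix)
      finally show ?thesis using g1 g2 by simp
    qed
    have Hc: "Delta k - \<epsilon>0 \<le> inner (r i *\<^sub>R (J (x k) $ i)) e"
    proof -
      have fin: "finite (range (\<lambda>j. r j * (F (x k) $ j - zstar F C j)))" by simp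
      have "phi F C r (x k) = r i * (F (x k) $ i - zstar F C i)"
        unfolding phi_def i_def by (rule Max_eqI[OF fin]) (use istar in auto)
      moreover have "r i * (F xs $ i - zstar F C i) \<le> phi F C r xs"
        unfolding phi_def by (rule Max_ge[OF finite_imageI]) auto
      moreover have "r i * (F (x k) $ i - F xs $ i) \<le> r i * (J (x k) *v e) $ i"
        using mult_left_mono[OF tang[of "x k" i]] r_pos e_def by (simp add: less_imp_le)
      moreover have "inner (r i *\<^sub>R (J (x k) $ i)) e = r i * (J (x k) *v e) $ i"
      proof -
        have "inner (J (x k) $ i) e = (J (x k) *v e) $ i"
          by (simp add: inner_vec_def matrix_vector_mult_def)
        then show ?thesis by simp
      qed
      moreover have "Delta k = phi F C r (x k) - philb F C r" using Delta_def by simp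
      ultimately show ?thesis using A7 phixs by (simp only: right_diff_distrib)
    qed
    have dk: "inner (d k) e = (if Delta k \<ge> 0 then \<alpha> k else 0) * inner (r i *\<^sub>R (J (x k) $ i)) e
        + \<beta> k * inner (x k - P) e + \<gamma> k * inner (transpose (J (x k)) *v \<rho>) e"
      using d_def unfolding P_def \<rho>_def p_def i_def by (simp add: inner_add_left)
    have ak: "\<alpha>lo \<le> \<alpha> k" "\<alpha> k \<le> \<alpha>hi" "\<beta>lo \<le> \<beta> k" "\<gamma>lo \<le> \<gamma> k" using A6 by auto
    have bk0: "0 \<le> \<beta> k" "0 \<le> \<gamma> k" "0 \<le> \<alpha> k" using ak(1,3,4) A6(1,3,5) by linarith+
    have b1: "\<beta> k * (2 * Hfun C (x k)) \<le> \<beta> k * inner (x k - P) e"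
      by (rule mult_left_mono[OF Ha]) (use bk0 in linarith)
    have g1: "\<gamma> k * (2 * Gfun F Q (x k)) \<le> \<gamma> k * inner (transpose (J (x k)) *v \<rho>) e"
      by (rule mult_left_mono[OF Hb]) (use bk0 in linarith)
    have a2: "\<alpha> k * \<epsilon>0 \<le> \<alpha>hi * \<epsilon>0" using mult_right_mono[OF ak(2) A7(1)] .
    have bH: "0 \<le> \<beta> k * Hfun C (x k)" using Hnn bk0 by (intro mult_nonneg_nonneg) auto
    have gG: "0 \<le> \<gamma> k * Gfun F Q (x k)" using Gnn bk0 by (intro mult_nonneg_nonneg) auto
    have "\<alpha> k * max (Delta k) 0 - \<alpha> k * \<epsilon>0 \<le> (if Delta k \<ge> 0 then \<alpha> k else 0) * inner (r i *\<^sub>R (J (x k) $ i)) e"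
    proof (cases "Delta k \<ge> 0")
      case True
      then show ?thesis using mult_left_mono[OF Hc bk0(3)] by (simp add: algebra_simps)
    next
      case False
      then show ?thesis using bk0 A7 by simp
    qed
    then show ?thesis using dk b1 g1 a2 bH gG Phi_def unfolding c_def e_def by (simp add: algebra_simps)
  qed
  have desc: "(norm (x (Suc k) - xs))^2 \<le> (norm (x k - xs))^2
      - 2 * (lam k / max \<mu> (norm (d k))) * (Phi k - c) + (lam k)^2" for k
  proof -
    define s where "s = lam k / max \<mu> (norm (d k))"
    have s0: "0 \<le> s" unfolding s_def using A5(1) mu_pos by (simp add: less_imp_le)
    have sd: "s * norm (d k) \<le> lam k"
    proof -
      have "s * norm (d k) = lam k * (norm (d k) / max \<mu> (norm (d k)))" unfolding s_def by simp
      also have "\<dots> \<le> lam k * 1"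
        by (rule mult_left_mono) (use A5(1) mu_pos in \<open>auto simp: less_imp_le divide_le_eq_1\<close>)
      finally show ?thesis by simp
    qed
    have sq: "(s * norm (d k))^2 \<le> (lam k)^2"
      using power_mono[OF sd] s0 by simp
    have ev: "x (Suc k) - xs = (x k - xs) - s *\<^sub>R d k" using step s_def by simp
    have nexp: "\<And>a b :: real^'n. (norm (a - s *\<^sub>R b))^2 = (norm a)^2 - 2 * s * inner b a + (s * norm b)^2"
      by (simp only: power_mult_distrib power2_norm_eq_inner) (simp add: inner_diff_left inner_diff_right inner_commute algebra_simps power2_eq_square)
    have "(norm (x (Suc k) - xs))^2 = (norm (x k - xs))^2 - 2 * s * inner (d k) (x k - xs) + (s * norm (d k))^2"
      unfolding ev by (rule nexp)
    moreover have "s * (Phi k - c) \<le> s * inner (d k) (x k - xs)" using mult_left_mono[OF key s0] .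
    ultimately show ?thesis using sq unfolding s_def by linarith
  qed
  have freq: "\<exists>k\<ge>N. Phi k < c + \<epsilon>" if eps: "\<epsilon> > 0" for \<epsilon> N
  proof (rule ccontr)
    assume "\<not> ?thesis"
    then have big: "\<And>k. k \<ge> N \<Longrightarrow> c + \<epsilon> \<le> Phi k" by force
    define Dn where "Dn k = (norm (x k - xs))^2" for k
    define S2 where "S2 = (\<Sum>j. (lam (j + N))^2)"
    have sum2: "summable (\<lambda>j. (lam (j + N))^2)" using A5(3) summable_iff_shift[of "\<lambda>j. (lam j)^2" N] by simp
    have etab_pos: "0 < etab" unfolding etab_def using mu_pos by simp
    have stepk: "Dn (Suc k) + 2 * \<epsilon> / etab * lam k \<le> Dn k + (lam k)^2" if "k \<ge> N" for k
    proof -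
      have eta: "0 < max \<mu> (norm (d k))" "max \<mu> (norm (d k)) \<le> etab"
        using mu_pos Mbar[rule_format, of k] unfolding etab_def by auto
      have "lam k / etab \<le> lam k / max \<mu> (norm (d k))"
        by (rule divide_left_mono) (use eta A5(1) in \<open>auto simp: less_imp_le\<close>)
      moreover have "\<epsilon> \<le> Phi k - c" using big[OF that] by simp
      ultimately have "lam k / etab * \<epsilon> \<le> lam k / max \<mu> (norm (d k)) * (Phi k - c)"
        using eps A5(1) eta by (intro mult_mono) (auto simp: less_imp_le)
      moreover have "2 * \<epsilon> / etab * lam k = 2 * (lam k / etab * \<epsilon>)" by simp
      moreover have "2 * (lam k / max \<mu> (norm (d k))) * (Phi k - c) = 2 * (lam k / max \<mu> (norm (d k)) * (Phi k - c))" by simp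
      ultimately show ?thesis using desc[of k] unfolding Dn_def by linarith
    qed
    have ind: "Dn (n + N) + 2 * \<epsilon> / etab * (\<Sum>j<n. lam (j + N)) \<le> Dn N + (\<Sum>j<n. (lam (j + N))^2)" for n
    proof (induction n)
      case 0 then show ?case by simp
    next
      case (Suc n)
      have "Dn (Suc (n + N)) + 2 * \<epsilon> / etab * lam (n + N) \<le> Dn (n + N) + (lam (n + N))^2"
        using stepk[of "n + N"] by simp
      then show ?case using Suc by (simp add: algebra_simps)
    qed
    have "summable (\<lambda>j. lam (j + N))"
    proof (rule summableI_nonneg_bounded)
      show "0 \<le> lam (j + N)" for j using A5(1) by (simp add: less_imp_le)
      fix n
      have "(\<Sum>j<n. (lam (j + N))^2) \<le> S2" unfolding S2_def by (rule sum_le_suminf[OF sum2]) auto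
      moreover have "0 \<le> Dn (n + N)" unfolding Dn_def by simp
      ultimately have "2 * \<epsilon> / etab * (\<Sum>j<n. lam (j + N)) \<le> Dn N + S2" using ind[of n] by linarith
      then show "(\<Sum>j<n. lam (j + N)) \<le> (Dn N + S2) * etab / (2 * \<epsilon>)"
        using eps etab_pos by (simp add: field_simps)
    qed
    then show False using A5(2) by simp
  qed
  have "\<forall>n N. \<exists>k. k \<ge> N \<and> Phi k < c + 1 / real (Suc n)"
    using freq by (metis of_nat_Suc of_nat_0_less_iff zero_less_Suc divide_pos_pos zero_less_one)
  then obtain g where g: "\<And>n N. g n N \<ge> N" "\<And>n N. Phi (g n N) < c + 1 / real (Suc n)" by metis
  define kj where "kj = rec_nat (g 0 0) (\<lambda>j p. g (Suc j) (Suc p))"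
  have kj0: "kj 0 = g 0 0" and kjS: "kj (Suc j) = g (Suc j) (Suc (kj j))" for j unfolding kj_def by simp_all
  have kjm: "strict_mono kj"
    unfolding strict_mono_Suc_iff using g(1) kjS by (metis Suc_le_lessD)
  have kjb: "Phi (kj j) < c + 1 / real (Suc j)" for j
    by (cases j) (use g(2) in \<open>simp_all only: kj0 kjS\<close>)
  have Phinn: "0 \<le> Phi k" for k
    using Phi_def a0 b0 g0 Hnn Gnn by (auto intro!: add_nonneg_nonneg mult_nonneg_nonneg)
  have "bounded (range (\<lambda>j. Phi (kj j)))"
  proof -
    have "\<bar>Phi (kj j)\<bar> \<le> c + 1" for j
    proof -
      have "1 / real (Suc j) \<le> 1" by simp
      then have "Phi (kj j) \<le> c + 1" using kjb[of j] by linarith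
      then show ?thesis using Phinn[of "kj j"] by simp
    qed
    then show ?thesis unfolding bounded_iff by (auto simp: real_norm_def)
  qed
  then obtain ell h where h: "strict_mono h" "((\<lambda>j. Phi (kj j)) \<circ> h) \<longlonglongrightarrow> ell"
    using bounded_imp_convergent_subsequence by blast
  define kk where "kk = kj \<circ> h"
  have kkm: "strict_mono kk" unfolding kk_def using kjm h(1) by (rule strict_mono_o)
  have lim: "(\<lambda>j. Phi (kk j)) \<longlonglongrightarrow> ell" using h(2) unfolding kk_def by (simp add: o_def)
  have ell0: "0 \<le> ell" by (rule LIMSEQ_le_const[OF lim]) (simp add: Phinn)
  have ellc: "ell \<le> c"
  proof -
    have l2: "(\<lambda>j. c + 1 / real (Suc j)) \<longlonglongrightarrow> c + 0"
      by (intro tendsto_intros) (rule LIMSEQ_Suc[OF lim_inverse_n'])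
    have "Phi (kk j) \<le> c + 1 / real (Suc j)" for j
    proof -
      have "j \<le> h j" using h(1) by (rule seq_suble)
      then have "1 / real (Suc (h j)) \<le> 1 / real (Suc j)" by (simp add: frac_le)
      then show ?thesis using kjb[of "h j"] unfolding kk_def by simp
    qed
    then show ?thesis using LIMSEQ_le[OF lim l2] by auto
  qed
  have Cst: "c \<le> (\<alpha>hi * max \<mu> Mbar / \<mu>) * \<epsilon>0"
  proof -
    have "1 \<le> max \<mu> Mbar / \<mu>" using mu_pos by simp
    moreover have "0 \<le> \<alpha>hi" using A6 by (meson order.trans less_imp_le)
    ultimately have "\<alpha>hi * 1 \<le> \<alpha>hi * (max \<mu> Mbar / \<mu>)" by (rule mult_left_mono)
    then show ?thesis unfolding c_def using A7(1) mult_right_mono by fastforce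
  qed
  have ellC: "ell \<le> (\<alpha>hi * max \<mu> Mbar / \<mu>) * \<epsilon>0" using ellc Cst by simp
  have bndH: "Hfun C (x k) \<le> Phi k / \<beta>lo" for k
  proof -
    have "\<beta>lo * Hfun C (x k) \<le> \<beta> k * Hfun C (x k)" using A6 Hnn by (simp add: mult_right_mono)
    also have "\<dots> \<le> Phi k" using Phi_def A6 Gnn
      by (simp, smt (verit) mult_nonneg_nonneg order.trans less_imp_le max.cobounded2)
    finally show ?thesis using A6(3) by (simp add: field_simps)
  qed
  have bndG: "Gfun F Q (x k) \<le> Phi k / \<gamma>lo" for k
  proof -
    have "\<gamma>lo * Gfun F Q (x k) \<le> \<gamma> k * Gfun F Q (x k)" using A6 Gnn by (simp add: mult_right_mono)
    also have "\<dots> \<le> Phi k" using Phi_def A6 Hnn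
      by (simp, smt (verit) mult_nonneg_nonneg order.trans less_imp_le max.cobounded2)
    finally show ?thesis using A6(5) by (simp add: field_simps)
  qed
  have bndD: "max (Delta k) 0 \<le> Phi k / \<alpha>lo" for k
  proof -
    have "\<alpha>lo * max (Delta k) 0 \<le> \<alpha> k * max (Delta k) 0" using A6 by (simp add: mult_right_mono)
    also have "\<dots> \<le> Phi k" using Phi_def A6 Hnn Gnn
      by (simp, smt (verit) mult_nonneg_nonneg order.trans less_imp_le)
    finally show ?thesis using A6(1) by (metis pos_le_divide_eq mult.commute)
  qed
  have divlim: "(\<lambda>j. Phi (kk j) / a) \<longlonglongrightarrow> ell / a" if "a \<noteq> 0" for a
    using lim that by (intro tendsto_intros)
  have divle: "ell / a \<le> (\<alpha>hi * max \<mu> Mbar / \<mu>) * \<epsilon>0 / a" if "0 < a" for a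
    using divide_right_mono[OF ellC] that by simp
  have zero: "\<epsilon>0 = 0 \<longrightarrow> ell = 0 \<and>
              (\<lambda>j. Hfun C (x (kk j))) \<longlonglongrightarrow> 0 \<and>
              (\<lambda>j. Gfun F Q (x (kk j))) \<longlonglongrightarrow> 0 \<and>
              (\<lambda>j. max (Delta (kk j)) 0) \<longlonglongrightarrow> 0"
  proof
    assume e0: "\<epsilon>0 = 0"
    then have l0: "ell = 0" using ell0 ellC by simp
    have t: "(\<lambda>j. Phi (kk j) / a) \<longlonglongrightarrow> 0" if "a \<noteq> 0" for a using divlim[of a] that l0 by simp
    have "(\<lambda>j. Hfun C (x (kk j))) \<longlonglongrightarrow> 0"
      by (rule tendsto_sandwich[OF _ _ tendsto_const t[of \<beta>lo]]) (use A6(3) in \<open>auto simp: Hnn bndH\<close>)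
    moreover have "(\<lambda>j. Gfun F Q (x (kk j))) \<longlonglongrightarrow> 0"
      by (rule tendsto_sandwich[OF _ _ tendsto_const t[of \<gamma>lo]]) (use A6(5) in \<open>auto simp: Gnn bndG\<close>)
    moreover have "(\<lambda>j. max (Delta (kk j)) 0) \<longlonglongrightarrow> 0"
      by (rule tendsto_sandwich[OF _ _ tendsto_const t[of \<alpha>lo]]) (use A6(1) bndD in \<open>auto simp del: max.bounded_iff\<close>)
    ultimately show "ell = 0 \<and> (\<lambda>j. Hfun C (x (kk j))) \<longlonglongrightarrow> 0 \<and>
              (\<lambda>j. Gfun F Q (x (kk j))) \<longlonglongrightarrow> 0 \<and>
              (\<lambda>j. max (Delta (kk j)) 0) \<longlonglongrightarrow> 0" using l0 by simp
  qed
  show ?thesis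
    apply (rule exI[of _ kk], rule exI[of _ ell])
    using kkm ell0 ellC lim bndH bndG bndD divlim divle A6(1) A6(3) A6(5) zero by simp
qed


end
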